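(* Let $F\in\mathbb{Z}[x_0,\ldots,x_n]$ be a form with $\mathrm{o}(F)<n+1$. Then for all except finitely many primes $p$, $\mathrm{o}(F_p)<n+1$.
   Context: $F_p$ denotes the reduction of $F$ modulo $p$. The order of a form over a field $K$ is the smallest integer $m$ such that the form is equivalent, via an invertible linear change of variables over $K$, to a form explicitly involving only $m$ variables; $\mathrm{o}(F)$ is the order over $\mathbb{Q}$ and $\mathrm{o}(F_p)$ the order over $\mathbb{F}_p$. *)

theory Defs
  imports Complex_Main "HOL-Library.Poly_Mapping" "HOL-Computational_Algebra.Primes"
begin

text \<open>Multivariate polynomials in the variables x_0, x_1, ... with coefficients in 'a:
  finitely supported maps from exponent vectors (monomials) to coefficients.\<close>
type_synonym 'a mpoly = "(nat \<Rightarrow>\<^sub>0 nat) \<Rightarrow>\<^sub>0 'a"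

definition mvars :: "'a::zero mpoly \<Rightarrow> nat set" where
  "mvars P = \<Union> (Poly_Mapping.keys ` Poly_Mapping.keys P)"

definition mconst :: "'a::zero \<Rightarrow> 'a mpoly" where
  "mconst c = Poly_Mapping.single 0 c"

definition mvar :: "nat \<Rightarrow> 'a::{zero,one} mpoly" where
  "mvar i = Poly_Mapping.single (Poly_Mapping.single i 1) 1"

definition msubst :: "(nat \<Rightarrow> 'a::comm_semiring_1 mpoly) \<Rightarrow> 'a mpoly \<Rightarrow> 'a mpoly" where
  "msubst \<sigma> P = (\<Sum>m\<in>Poly_Mapping.keys P. mconst (Poly_Mapping.lookup P m) * (\<Prod>i\<in>Poly_Mapping.keys m. \<sigma> i ^ Poly_Mapping.lookup m i))"

definition is_form :: "nat \<Rightarrow> 'a::zero mpoly \<Rightarrow> bool" where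
  "is_form n F \<longleftrightarrow> mvars F \<subseteq> {..n} \<and>
     (\<exists>d. \<forall>m\<in>Poly_Mapping.keys F. (\<Sum>i\<in>Poly_Mapping.keys m. Poly_Mapping.lookup m i) = d)"

definition lin_change :: "nat \<Rightarrow> (nat \<Rightarrow> nat \<Rightarrow> 'a::comm_semiring_1) \<Rightarrow> nat \<Rightarrow> 'a mpoly" where
  "lin_change n A = (\<lambda>i. \<Sum>j\<le>n. mconst (A i j) * mvar j)"

definition invertible_mat :: "nat \<Rightarrow> (nat \<Rightarrow> nat \<Rightarrow> 'a::field) \<Rightarrow> bool" where
  "invertible_mat n A \<longleftrightarrow> (\<exists>B. \<forall>i\<le>n. \<forall>k\<le>n.
      (\<Sum>j\<le>n. A i j * B j k) = (if i = k then 1 else 0) \<and>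
      (\<Sum>j\<le>n. B i j * A j k) = (if i = k then 1 else 0))"

definition order_field :: "nat \<Rightarrow> 'a::field mpoly \<Rightarrow> nat" where
  "order_field n F = (LEAST m. \<exists>A. invertible_mat n A \<and>
       card (mvars (msubst (lin_change n A) F)) \<le> m)"

definition reduce_mod :: "int \<Rightarrow> int mpoly \<Rightarrow> int mpoly" where
  "reduce_mod p P = Poly_Mapping.map (\<lambda>c. c mod p) P"

definition invertible_mat_mod :: "int \<Rightarrow> nat \<Rightarrow> (nat \<Rightarrow> nat \<Rightarrow> int) \<Rightarrow> bool" where
  "invertible_mat_mod p n A \<longleftrightarrow> (\<exists>B. \<forall>i\<le>n. \<forall>k\<le>n.
      (\<Sum>j\<le>n. A i j * B j k) mod p = (if i = k then 1 else 0) mod p \<and>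
      (\<Sum>j\<le>n. B i j * A j k) mod p = (if i = k then 1 else 0) mod p)"

text \<open>Order of the reduction F_p over F_p (every matrix over F_p lifts to an integer
  matrix, and reduction mod p commutes with substitution).\<close>
definition order_mod :: "nat \<Rightarrow> nat \<Rightarrow> int mpoly \<Rightarrow> nat" where
  "order_mod p n F = (LEAST m. \<exists>A. invertible_mat_mod (int p) n A \<and>
       card (mvars (reduce_mod (int p) (msubst (lin_change n A) F))) \<le> m)"

end

theory Submission
  imports Defs "HOL-Number_Theory.Cong"
begin

lemma lookup_map0: "f 0 = 0 \<Longrightarrow> Poly_Mapping.lookup (Poly_Mapping.map f p) k = f (Poly_Mapping.lookup p k)"
  by transfer (auto simp: when_def)

lemma keys_map_sub: "Poly_Mapping.keys (Poly_Mapping.map f p) \<subseteq> Poly_Mapping.keys p"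
  by transfer (auto simp: when_def)

lemma keys_map_inj: "(\<And>x. f x = 0 \<longleftrightarrow> x = 0) \<Longrightarrow> Poly_Mapping.keys (Poly_Mapping.map f p) = Poly_Mapping.keys p"
  by transfer (auto simp: when_def)

lemma pm_expand: "p = (\<Sum>m\<in>Poly_Mapping.keys p. Poly_Mapping.single m (Poly_Mapping.lookup p m))"
proof -
  have *: "finite I
        \<Longrightarrow> Poly_Mapping.lookup (\<Sum>i\<in>I. Poly_Mapping.single i (Poly_Mapping.lookup p i)) j =
            (if j \<in> I then Poly_Mapping.lookup p j else 0)" for I j
    by (induction I rule: finite_induct) (auto simp: lookup_single lookup_add when_def)
  show ?thesis
    by (rule poly_mapping_eqI) (fastforce simp add: in_keys_iff *)
qed

abbreviation hmap :: "('a::comm_monoid_add \<Rightarrow>\<^sub>0 int) \<Rightarrow> ('a \<Rightarrow>\<^sub>0 'b::comm_ring_1)" where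
  "hmap \<equiv> Poly_Mapping.map of_int"

lemma hmap_add: "hmap (p + q) = hmap p + hmap q"
  by (rule poly_mapping_eqI) (simp add: lookup_map0 lookup_add)

lemma hmap_zero: "hmap 0 = 0"
  by (rule poly_mapping_eqI) (simp add: lookup_map0)

lemma hmap_sum: "hmap (sum f I) = (\<Sum>i\<in>I. hmap (f i))"
  by (induction I rule: infinite_finite_induct) (auto simp: hmap_add hmap_zero)

lemma hmap_single: "hmap (Poly_Mapping.single m a) = Poly_Mapping.single m (of_int a)"
  by simp

lemma hmap_mult: "hmap (p * q) = hmap p * hmap q"
proof -
  have "hmap (p * q) = hmap ((\<Sum>m\<in>Poly_Mapping.keys p. Poly_Mapping.single m (Poly_Mapping.lookup p m)) *
     (\<Sum>m\<in>Poly_Mapping.keys q. Poly_Mapping.single m (Poly_Mapping.lookup q m)))"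
    using pm_expand[of p] pm_expand[of q] by simp
  also have "\<dots> = (\<Sum>m\<in>Poly_Mapping.keys p. \<Sum>m'\<in>Poly_Mapping.keys q.
       hmap (Poly_Mapping.single (m + m') (Poly_Mapping.lookup p m * Poly_Mapping.lookup q m')))"
    by (simp add: sum_distrib_left sum_distrib_right hmap_sum mult_single) (rule sum.swap)
  also have "\<dots> = (\<Sum>m\<in>Poly_Mapping.keys p. \<Sum>m'\<in>Poly_Mapping.keys q.
       Poly_Mapping.single m (of_int (Poly_Mapping.lookup p m)) * Poly_Mapping.single m' (of_int (Poly_Mapping.lookup q m')))"
    by (simp add: mult_single)
  also have "\<dots> = hmap (\<Sum>m\<in>Poly_Mapping.keys p. Poly_Mapping.single m (Poly_Mapping.lookup p m)) *
     hmap (\<Sum>m\<in>Poly_Mapping.keys q. Poly_Mapping.single m (Poly_Mapping.lookup q m))"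
    by (simp add: sum_distrib_left sum_distrib_right hmap_sum) (rule sum.swap)
  also have "\<dots> = hmap p * hmap q"
    using pm_expand[of p, symmetric] pm_expand[of q, symmetric] by simp
  finally show ?thesis .
qed

lemma hmap_one: "hmap 1 = 1"
  by (metis hmap_single of_int_1 single_one)

lemma hmap_power: "hmap (p ^ k) = hmap p ^ k"
  by (induction k) (simp_all add: hmap_one hmap_mult)

lemma hmap_prod: "hmap (prod f I) = (\<Prod>i\<in>I. hmap (f i))"
  by (induction I rule: infinite_finite_induct) (auto simp: hmap_one hmap_mult)

lemma hmap_mconst: "hmap (mconst c) = mconst (of_int c)"
  by (simp add: mconst_def)

lemma hmap_mvar: "hmap (mvar i) = mvar i"
  by (simp add: mvar_def)

lemma of_int_eq0: "((of_int x :: 'b::ring_char_0) = 0) = (x = 0)" by simp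

lemma hmap_msubst: "(hmap (msubst \<sigma> P) :: 'b::{comm_ring_1,ring_char_0} mpoly) = msubst (\<lambda>i. hmap (\<sigma> i)) (hmap P)"
proof -
  have k: "Poly_Mapping.keys (hmap P :: 'b mpoly) = Poly_Mapping.keys P"
    by (rule keys_map_inj) simp
  show ?thesis
    unfolding msubst_def k
    by (simp add: hmap_sum hmap_mult hmap_prod hmap_power hmap_mconst lookup_map0)
qed


lemma mconst_mult: "mconst (a * b) = (mconst a * mconst b :: 'a::comm_semiring_1 mpoly)"
  by (simp add: mconst_def mult_single)

lemma mconst_one: "mconst 1 = (1 :: 'a::comm_semiring_1 mpoly)"
  by (simp add: mconst_def)

lemma mconst_power: "mconst a ^ k = (mconst (a ^ k) :: 'a::comm_semiring_1 mpoly)"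
  by (induction k) (simp_all add: mconst_one mconst_mult)

lemma mvars_mconst_mult:
  assumes "(c :: 'a::idom) \<noteq> 0"
  shows "mvars (mconst c * G) = mvars G"
proof -
  have "mconst c * G = Poly_Mapping.map ((*) c) G"
    by (simp add: mconst_def mult_map_scale_conv_mult)
  moreover have "Poly_Mapping.keys (Poly_Mapping.map ((*) c) G) = Poly_Mapping.keys G"
    by (rule keys_map_inj) (simp add: assms)
  ultimately show ?thesis by (simp add: mvars_def)
qed

lemma msubst_scale:
  assumes "\<forall>m\<in>Poly_Mapping.keys P. (\<Sum>i\<in>Poly_Mapping.keys m. Poly_Mapping.lookup m i) = d"
    and "\<And>m i. m \<in> Poly_Mapping.keys P \<Longrightarrow> i \<in> Poly_Mapping.keys m \<Longrightarrow> \<sigma>' i = mconst c * \<sigma> i"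
  shows "msubst \<sigma>' P = mconst (c ^ d) * msubst (\<sigma> :: nat \<Rightarrow> 'a::comm_semiring_1 mpoly) P"
  unfolding msubst_def sum_distrib_left
proof (rule sum.cong[OF refl])
  fix m assume m: "m \<in> Poly_Mapping.keys P"
  have "(\<Prod>i\<in>Poly_Mapping.keys m. \<sigma>' i ^ Poly_Mapping.lookup m i)
     = (\<Prod>i\<in>Poly_Mapping.keys m. mconst c ^ Poly_Mapping.lookup m i * \<sigma> i ^ Poly_Mapping.lookup m i)"
    using assms(2)[OF m] by (intro prod.cong) (simp_all add: power_mult_distrib)
  also have "\<dots> = mconst c ^ (\<Sum>i\<in>Poly_Mapping.keys m. Poly_Mapping.lookup m i) * (\<Prod>i\<in>Poly_Mapping.keys m. \<sigma> i ^ Poly_Mapping.lookup m i)"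
    by (simp add: prod.distrib power_sum)
  also have "\<dots> = mconst (c ^ d) * (\<Prod>i\<in>Poly_Mapping.keys m. \<sigma> i ^ Poly_Mapping.lookup m i)"
    using assms(1) m by (simp add: mconst_power)
  finally show "mconst (Poly_Mapping.lookup P m) * (\<Prod>i\<in>Poly_Mapping.keys m. \<sigma>' i ^ Poly_Mapping.lookup m i) =
         mconst (c ^ d) * (mconst (Poly_Mapping.lookup P m) * (\<Prod>i\<in>Poly_Mapping.keys m. \<sigma> i ^ Poly_Mapping.lookup m i))"
    by (simp add: ac_simps)
qed

lemma common_den:
  assumes "finite S"
  shows "\<exists>D::int. D > 0 \<and> (\<forall>x\<in>S. (of_int D * x :: rat) \<in> \<int>)"
  using assms
proof (induction S rule: finite_induct)
  case empty then show ?case by (intro exI[of _ 1]) simp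
next
  case (insert x S)
  then obtain D where D: "D > 0" "\<forall>y\<in>S. (of_int D * y :: rat) \<in> \<int>" by blast
  obtain a b where q: "quotient_of x = (a, b)" by (cases "quotient_of x")
  have b: "b > 0" using quotient_of_denom_pos[OF q] .
  have xe: "x = of_int a / of_int b" using quotient_of_div[OF q] .
  have "of_int (D * b) * x = of_int (D * a)"
    using b by (simp add: xe)
  hence 1: "of_int (D * b) * x \<in> \<int>" by (subst \<open>of_int (D * b) * x = of_int (D * a)\<close>) (rule Ints_of_int)
  have 2: "of_int (D * b) * y \<in> \<int>" if "y \<in> S" for y
  proof -
    have "of_int (D * b) * y = of_int b * (of_int D * y)" by simp
    thus ?thesis using D(2) that by (metis Ints_mult Ints_of_int)
  qed
  show ?case using 1 2 D b by (intro exI[of _ "D * b"]) auto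
qed


lemma inv_id: "invertible_mat n (\<lambda>i j. if i = j then 1 else (0::rat))"
proof -
  have e: "(\<Sum>j\<le>n. (if i = j then 1 else 0) * (if j = k then 1 else 0)) = (if i = k then 1 else (0::rat))"
    if "i \<le> n" for i k
  proof -
    have "(\<Sum>j\<le>n. (if i = j then 1 else 0) * (if j = k then 1 else (0::rat)))
        = (\<Sum>j\<le>n. if j = i then (if i = k then 1 else 0) else 0)"
      by (rule sum.cong) auto
    also have "\<dots> = (if i = k then 1 else 0)" using that by simp
    finally show ?thesis .
  qed
  show ?thesis unfolding invertible_mat_def
    by (intro exI[of _ "\<lambda>i j. if i = j then 1 else (0::rat)"] allI impI conjI e)
qed

lemma finite_mvars: "finite (mvars P)"
  by (simp add: mvars_def)

theorem corollary3p10: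
  fixes F :: "int mpoly" and n :: nat
  assumes "is_form n F"
    and "order_field n (Poly_Mapping.map (of_int :: int \<Rightarrow> rat) F) < n + 1"
  shows "finite {p :: nat. prime p \<and> \<not> (order_mod p n F < n + 1)}"
proof -
  define FQ where "FQ = (Poly_Mapping.map (of_int :: int \<Rightarrow> rat) F)"
  have kFQ: "Poly_Mapping.keys FQ = Poly_Mapping.keys F"
    unfolding FQ_def by (rule keys_map_inj) simp
  from assms(1) obtain d where
    vF: "mvars F \<subseteq> {..n}" and
    dF: "\<forall>m\<in>Poly_Mapping.keys F. (\<Sum>i\<in>Poly_Mapping.keys m. Poly_Mapping.lookup m i) = d"
    unfolding is_form_def by blast
  define P where "P = (\<lambda>m. \<exists>A. invertible_mat n A \<and> card (mvars (msubst (lin_change n A) FQ)) \<le> m)"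
  have inv1: "invertible_mat n (\<lambda>i j. if i = j then 1 else (0::rat))"
    by (rule inv_id)
  have "P (card (mvars (msubst (lin_change n (\<lambda>i j. if i = j then 1 else (0::rat))) FQ)))"
    unfolding P_def using inv1 by blast
  hence "P (Least P)" by (rule LeastI)
  then obtain A where A: "invertible_mat n A" and cA0: "card (mvars (msubst (lin_change n A) FQ)) \<le> Least P"
    unfolding P_def by blast
  have "Least P < n + 1" using assms(2) unfolding P_def FQ_def order_field_def by simp
  hence cA: "card (mvars (msubst (lin_change n A) FQ)) \<le> n" using cA0 by simp
  from A obtain B where AB: "\<forall>i\<le>n. \<forall>k\<le>n.
      (\<Sum>j\<le>n. A i j * B j k) = (if i = k then 1 else 0) \<and>
      (\<Sum>j\<le>n. B i j * A j k) = (if i = k then 1 else 0)"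
    unfolding invertible_mat_def by blast
  obtain D where D: "D > 0" "\<forall>x\<in>(\<lambda>(i,j). A i j) ` ({..n} \<times> {..n}). of_int D * x \<in> \<int>"
    using common_den[of "(\<lambda>(i,j). A i j) ` ({..n} \<times> {..n})"] by auto
  obtain E where E: "E > 0" "\<forall>x\<in>(\<lambda>(i,j). B i j) ` ({..n} \<times> {..n}). of_int E * x \<in> \<int>"
    using common_den[of "(\<lambda>(i,j). B i j) ` ({..n} \<times> {..n})"] by auto
  define A' where "A' = (\<lambda>i j. \<lfloor>of_int D * A i j\<rfloor>)"
  define B' where "B' = (\<lambda>i j. \<lfloor>of_int E * B i j\<rfloor>)"
  have hA: "of_int (A' i j) = of_int D * A i j" if "i \<le> n" "j \<le> n" for i j
  proof -
    have "of_int D * A i j \<in> \<int>" using D(2) that by auto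
    thus ?thesis unfolding A'_def by (auto elim!: Ints_cases)
  qed
  have hB: "of_int (B' i j) = of_int E * B i j" if "i \<le> n" "j \<le> n" for i j
  proof -
    have "of_int E * B i j \<in> \<int>" using E(2) that by auto
    thus ?thesis unfolding B'_def by (auto elim!: Ints_cases)
  qed
  have AB1: "(\<Sum>j\<le>n. A' i j * B' j k) = D * E * (if i = k then 1 else 0)"
    if "i \<le> n" "k \<le> n" for i k
  proof -
    have "(of_int (\<Sum>j\<le>n. A' i j * B' j k) :: rat) = (\<Sum>j\<le>n. (of_int D * A i j) * (of_int E * B j k))"
      using that by (simp add: hA hB)
    also have "\<dots> = of_int D * of_int E * (\<Sum>j\<le>n. A i j * B j k)"
      by (simp add: sum_distrib_left ac_simps)
    also have "\<dots> = of_int (D * E * (if i = k then 1 else 0))"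
      using AB that by simp
    finally show ?thesis by (simp only: of_int_eq_iff)
  qed
  have AB2: "(\<Sum>j\<le>n. B' i j * A' j k) = D * E * (if i = k then 1 else 0)"
    if "i \<le> n" "k \<le> n" for i k
  proof -
    have "(of_int (\<Sum>j\<le>n. B' i j * A' j k) :: rat) = (\<Sum>j\<le>n. (of_int E * B i j) * (of_int D * A j k))"
      using that by (simp add: hA hB)
    also have "\<dots> = of_int D * of_int E * (\<Sum>j\<le>n. B i j * A j k)"
      by (simp add: sum_distrib_left ac_simps)
    also have "\<dots> = of_int (D * E * (if i = k then 1 else 0))"
      using AB that by simp
    finally show ?thesis by (simp only: of_int_eq_iff)
  qed
  define G where "G = msubst (lin_change n A') F"
  have lc: "hmap (lin_change n A' i) = mconst (of_int D) * lin_change n A i" if "i \<le> n" for i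
    using that by (simp add: lin_change_def hmap_sum hmap_mult hmap_mconst hmap_mvar hA
        sum_distrib_left mconst_mult mult.assoc)
  have "(hmap G :: rat mpoly) = msubst (\<lambda>i. hmap (lin_change n A' i)) FQ"
    unfolding G_def FQ_def by (rule hmap_msubst)
  also have "\<dots> = mconst (of_int D ^ d) * msubst (lin_change n A) FQ"
  proof (rule msubst_scale)
    show "\<forall>m\<in>Poly_Mapping.keys FQ. (\<Sum>i\<in>Poly_Mapping.keys m. Poly_Mapping.lookup m i) = d"
      using dF kFQ by simp
    fix m i assume "m \<in> Poly_Mapping.keys FQ" "i \<in> Poly_Mapping.keys m"
    hence "i \<in> mvars F" using kFQ unfolding mvars_def by auto
    hence "i \<le> n" using vF by auto
    thus "hmap (lin_change n A' i) = mconst (of_int D) * lin_change n A i" by (rule lc)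
  qed
  finally have "mvars (hmap G :: rat mpoly) = mvars (msubst (lin_change n A) FQ)"
    using D(1) by (simp add: mvars_mconst_mult)
  moreover have "mvars (hmap G :: rat mpoly) = mvars G"
  proof -
    have "Poly_Mapping.keys (hmap G :: rat mpoly) = Poly_Mapping.keys G"
      by (rule keys_map_inj) simp
    thus ?thesis by (simp add: mvars_def)
  qed
  ultimately have cG: "card (mvars G) \<le> n" using cA by simp
  have good: "order_mod p n F < n + 1" if p: "prime p" "\<not> int p dvd D * E" for p
  proof -
    have pi: "prime (int p)" using p(1) by simp
    have "coprime (int p) (D * E)" by (rule prime_imp_coprime[OF pi p(2)])
    hence "coprime (D * E) (int p)" by (simp add: coprime_commute)
    from cong_solve_coprime_int[OF this] obtain u where u: "[D * E * u = 1] (mod int p)" by blast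
    hence u': "(D * E * u) mod int p = 1 mod int p" unfolding cong_def .
    have invp: "invertible_mat_mod (int p) n A'"
      unfolding invertible_mat_mod_def
    proof (intro exI[of _ "\<lambda>i j. u * B' i j"] allI impI conjI)
      fix i k assume ik: "i \<le> n" "k \<le> n"
      have "(\<Sum>j\<le>n. A' i j * (u * B' j k)) = u * (\<Sum>j\<le>n. A' i j * B' j k)"
        by (simp add: sum_distrib_left ac_simps)
      also have "\<dots> = (D * E * u) * (if i = k then 1 else 0)" using AB1[OF ik] by simp
      finally show "(\<Sum>j\<le>n. A' i j * (u * B' j k)) mod int p = (if i = k then 1 else 0) mod int p"
        using u' by (cases "i = k") simp_all
      have "(\<Sum>j\<le>n. u * B' i j * A' j k) = u * (\<Sum>j\<le>n. B' i j * A' j k)"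
        by (simp add: sum_distrib_left ac_simps)
      also have "\<dots> = (D * E * u) * (if i = k then 1 else 0)" using AB2[OF ik] by simp
      finally show "(\<Sum>j\<le>n. u * B' i j * A' j k) mod int p = (if i = k then 1 else 0) mod int p"
        using u' by (cases "i = k") simp_all
    qed
    have cp: "card (mvars (reduce_mod (int p) G)) \<le> n"
    proof -
      have "mvars (reduce_mod (int p) G) \<subseteq> mvars G"
        unfolding reduce_mod_def mvars_def by (intro Union_mono image_mono keys_map_sub)
      hence "card (mvars (reduce_mod (int p) G)) \<le> card (mvars G)"
        by (rule card_mono[OF finite_mvars])
      thus ?thesis using cG by simp
    qed
    have ex: "\<exists>A. invertible_mat_mod (int p) n A \<and>
       card (mvars (reduce_mod (int p) (msubst (lin_change n A) F))) \<le> n"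
      using invp cp unfolding G_def by (intro exI[of _ A'] conjI)
    have "order_mod p n F \<le> n"
      unfolding order_mod_def by (rule Least_le) (rule ex)
    thus ?thesis by simp
  qed
  have DE: "D * E \<noteq> 0" using D(1) E(1) by simp
  have "{p :: nat. prime p \<and> \<not> (order_mod p n F < n + 1)} \<subseteq> {..nat \<bar>D * E\<bar>}"
  proof
    fix p assume "p \<in> {p :: nat. prime p \<and> \<not> (order_mod p n F < n + 1)}"
    hence "int p dvd D * E" using good by blast
    hence "int p \<le> \<bar>D * E\<bar>" using dvd_imp_le_int[OF DE] by fastforce
    thus "p \<in> {..nat \<bar>D * E\<bar>}" by simp
  qed
  thus ?thesis by (rule finite_subset) simp
qed

end
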